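(* In the setting described in the context, $\frac{qAK^*-q^{-1}K^*A}{q-q^{-1}}=aI$, $\frac{qK^{*-1}B-q^{-1}BK^{*-1}}{q-q^{-1}}=bI$, $\frac{qA^*K^{*-1}-q^{-1}K^{*-1}A^*}{q-q^{-1}}=a^*I$, $\frac{qK^*B^*-q^{-1}B^*K^*}{q-q^{-1}}=b^*I$.
   Context: $\mathbb K$ is an algebraically closed field, $q\in\mathbb K$ nonzero and not a root of unity, $V$ a nonzero finite-dimensional $\mathbb K$-vector space. A tridiagonal pair on $V$ is an ordered pair $A,A^*$ of linear maps $V\to V$ such that: (i) each of $A,A^*$ is diagonalizable; (ii) there is an ordering $V_0,\dots,V_d$ of the eigenspaces of $A$ with $A^*V_i\subseteq V_{i-1}+V_i+V_{i+1}$ ($V_{-1}=V_{d+1}=0$); (iii) there is an ordering $V^*_0,\dots,V^*_\delta$ of the eigenspaces of $A^*$ with $AV^*_i\subseteq V^*_{i-1}+V^*_i+V^*_{i+1}$ ($V^*_{-1}=V^*_{\delta+1}=0$); (iv) no subspace $W\ne0,V$ satisfies $AW\subseteq W$, $A^*W\subseteq W$. It is known $d=\delta$; orderings as in (ii),(iii) are called standard. Setting: $A,A^*$ is a tridiagonal pair on $V$; $V_0,\dots,V_d$ (resp. $V^*_0,\dots,V^*_d$) is a standard ordering of the eigenspaces of $A$ (resp. $A^*$); the eigenvalue of $A$ on $V_i$ is $aq^{2i-d}$ and that of $A^*$ on $V^*_i$ is $a^*q^{d-2i}$ for some nonzero $a,a^*\in\mathbb K$; $b,b^*\in\mathbb K$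 are nonzero. For $0\le i\le d$, each of the following three families of subspaces forms a decomposition of $V$ (nonzero subspaces, direct sum equal to $V$): $(V^*_0+\cdots+V^*_i)\cap(V_0+\cdots+V_{d-i})$; $(V^*_{d-i}+\cdots+V^*_d)\cap(V_i+\cdots+V_d)$; $(V^*_{d-i}+\cdots+V^*_d)\cap(V_0+\cdots+V_{d-i})$. $B$ is the linear map acting as $bq^{2i-d}I$ on $(V^*_0+\cdots+V^*_i)\cap(V_0+\cdots+V_{d-i})$; $B^*$ acts as $b^*q^{d-2i}I$ on $(V^*_{d-i}+\cdots+V^*_d)\cap(V_i+\cdots+V_d)$; $K^*$ acts as $q^{2i-d}I$ on $(V^*_{d-i}+\cdots+V^*_d)\cap(V_0+\cdots+V_{d-i})$ (for each $0\le i\le d$). *)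

theory Defs
  imports Main "HOL-Computational_Algebra.Polynomial"
begin

definition alg_closed :: "'k::field itself \<Rightarrow> bool" where
  "alg_closed _ \<longleftrightarrow> (\<forall>p::'k poly. 0 < degree p \<longrightarrow> (\<exists>x. poly p x = 0))"

definition eigsp :: "('k::field \<Rightarrow> 'v::ab_group_add \<Rightarrow> 'v) \<Rightarrow> ('v \<Rightarrow> 'v) \<Rightarrow> 'k \<Rightarrow> 'v set" where
  "eigsp scale f th = {v. f v = scale th v}"

definition is_eigenvalue :: "('k::field \<Rightarrow> 'v::ab_group_add \<Rightarrow> 'v) \<Rightarrow> ('v \<Rightarrow> 'v) \<Rightarrow> 'k \<Rightarrow> bool" where
  "is_eigenvalue scale f th \<longleftrightarrow> (\<exists>v. v \<noteq> 0 \<and> f v = scale th v)"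

definition diagonalizable :: "('k::field \<Rightarrow> 'v::ab_group_add \<Rightarrow> 'v) \<Rightarrow> ('v \<Rightarrow> 'v) \<Rightarrow> bool" where
  "diagonalizable scale f \<longleftrightarrow> module.span scale (\<Union>th. eigsp scale f th) = UNIV"

definition ssum :: "('k::field \<Rightarrow> 'v::ab_group_add \<Rightarrow> 'v) \<Rightarrow> nat set \<Rightarrow> (nat \<Rightarrow> 'v set) \<Rightarrow> 'v set" where
  "ssum scale I W = module.span scale (\<Union>i\<in>I. W i)"

definition is_decomposition :: "('k::field \<Rightarrow> 'v::ab_group_add \<Rightarrow> 'v) \<Rightarrow> nat \<Rightarrow> (nat \<Rightarrow> 'v set) \<Rightarrow> bool" where
  "is_decomposition scale d W \<longleftrightarrow>
     (\<forall>i\<le>d. module.subspace scale (W i) \<and> W i \<noteq> {0}) \<and>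
     ssum scale {..d} W = UNIV \<and>
     (\<forall>w. (\<forall>i\<le>d. w i \<in> W i) \<and> (\<Sum>i\<le>d. w i) = 0 \<longrightarrow> (\<forall>i\<le>d. w i = 0))"

text \<open>Tridiagonal pair A, As on V (the whole type 'v) with standard orderings
  V i = eigsp A (th i), Vs i = eigsp As (ths i), i = 0..d.\<close>
definition tridiagonal_pair_std ::
  "('k::field \<Rightarrow> 'v::ab_group_add \<Rightarrow> 'v) \<Rightarrow> ('v \<Rightarrow> 'v) \<Rightarrow> ('v \<Rightarrow> 'v) \<Rightarrow> nat
     \<Rightarrow> (nat \<Rightarrow> 'k) \<Rightarrow> (nat \<Rightarrow> 'k) \<Rightarrow> bool" where
  "tridiagonal_pair_std scale A As d th ths \<longleftrightarrow>
     Vector_Spaces.linear scale scale A \<and> Vector_Spaces.linear scale scale As \<and>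
     diagonalizable scale A \<and> diagonalizable scale As \<and>
     inj_on th {..d} \<and> (\<forall>i\<le>d. is_eigenvalue scale A (th i)) \<and>
     (\<forall>t. is_eigenvalue scale A t \<longrightarrow> t \<in> th ` {..d}) \<and>
     inj_on ths {..d} \<and> (\<forall>i\<le>d. is_eigenvalue scale As (ths i)) \<and>
     (\<forall>t. is_eigenvalue scale As t \<longrightarrow> t \<in> ths ` {..d}) \<and>
     (\<forall>i\<le>d. As ` eigsp scale A (th i)
        \<subseteq> ssum scale ({i - 1..i + 1} \<inter> {..d}) (\<lambda>j. eigsp scale A (th j))) \<and>
     (\<forall>i\<le>d. A ` eigsp scale As (ths i)
        \<subseteq> ssum scale ({i - 1..i + 1} \<inter> {..d}) (\<lambda>j. eigsp scale As (ths j))) \<and>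
     (\<forall>W. module.subspace scale W \<and> A ` W \<subseteq> W \<and> As ` W \<subseteq> W \<longrightarrow> W = {0} \<or> W = UNIV)"

end

theory Submission
  imports Defs
begin

context vector_space
begin

lemma lin:
  assumes "Vector_Spaces.linear scale scale f"
  shows "f (x + y) = f x + f y" "f (c *s x) = c *s f x" "f (x - y) = f x - f y" "f 0 = 0"
    "f (sum g A) = (\<Sum>a\<in>A. f (g a))"
  using module_hom.add[OF module_hom_linearI[OF assms]] module_hom.scale[OF module_hom_linearI[OF assms]]
    module_hom.diff[OF module_hom_linearI[OF assms]] module_hom.zero[OF module_hom_linearI[OF assms]]
    module_hom.sum[OF module_hom_linearI[OF assms]]
  by auto

lemma lin_shift:
  assumes "Vector_Spaces.linear scale scale f"
  shows "Vector_Spaces.linear scale scale (\<lambda>x. f x - \<mu> *s x)"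
  apply (subst Vector_Spaces.linear_iff)
  using vector_space_axioms lin[OF assms]
  by (auto simp: algebra_simps scale_left_commute)

lemma lin_span:
  assumes "Vector_Spaces.linear scale scale f" "\<And>x. x \<in> S \<Longrightarrow> f x \<in> T" "subspace T" "x \<in> span S"
  shows "f x \<in> T"
proof -
  have "subspace {x. f x \<in> T}"
    by (rule module_hom.subspace_linear_preimage[OF module_hom_linearI[OF assms(1)]]) (fact assms(3))
  then show ?thesis using span_induct[OF assms(4), of "\<lambda>x. f x \<in> T"] assms(2) by auto
qed

lemma eig_sub:
  assumes "Vector_Spaces.linear scale scale f"
  shows "subspace (eigsp scale f t)"
  unfolding subspace_def eigsp_def using lin[OF assms]
  by (auto simp: algebra_simps scale_left_commute)

lemma sum_rep:
  assumes "finite I" "\<And>j. j \<in> I \<Longrightarrow> subspace (U j)" "v \<in> span (\<Union>j\<in>I. U j)"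
  shows "\<exists>u. (\<forall>j\<in>I. u j \<in> U j) \<and> v = sum u I"
proof -
  let ?P = "\<lambda>v. \<exists>u. (\<forall>j\<in>I. u j \<in> U j) \<and> v = sum u I"
  have "subspace (Collect ?P)"
  proof (rule subspaceI)
    show "0 \<in> Collect ?P" using assms(2) subspace_0 by (intro CollectI exI[of _ "\<lambda>_. 0"]) auto
  next
    fix x y assume "x \<in> Collect ?P" "y \<in> Collect ?P"
    then obtain u w where "\<forall>j\<in>I. u j \<in> U j" "x = sum u I" "\<forall>j\<in>I. w j \<in> U j" "y = sum w I" by auto
    then show "x + y \<in> Collect ?P" using assms(2) subspace_add
      by (intro CollectI exI[of _ "\<lambda>j. u j + w j"]) (auto simp: sum.distrib)
  next
    fix c x assume "x \<in> Collect ?P"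
    then obtain u where "\<forall>j\<in>I. u j \<in> U j" "x = sum u I" by auto
    then show "c *s x \<in> Collect ?P" using assms(2) subspace_scale
      by (intro CollectI exI[of _ "\<lambda>j. c *s u j"]) (auto simp: scale_sum_right)
  qed
  moreover have "?P x" if xU: "x \<in> (\<Union>j\<in>I. U j)" for x
  proof -
    obtain j where j: "j \<in> I" "x \<in> U j" using xU by blast
    show ?thesis using j assms(1,2) subspace_0
      by (intro exI[of _ "\<lambda>k. if k = j then x else 0"]) (auto simp: sum.delta)
  qed
  ultimately show ?thesis using span_induct[OF assms(3), of ?P] by auto
qed

lemma sum_in_span:
  assumes "\<And>j. j \<in> I \<Longrightarrow> u j \<in> U j"
  shows "sum u I \<in> span (\<Union>j\<in>I. U j)"
  using assms by (intro span_sum span_base) auto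

lemma eig_split:
  assumes "Vector_Spaces.linear scale scale f" "f v = lm *s v" "f y - \<mu> *s y = c *s v" "lm \<noteq> \<mu>"
  shows "\<exists>y1 y2. y = y1 + y2 \<and> y1 \<in> eigsp scale f lm \<and> y2 \<in> eigsp scale f \<mu>"
proof -
  define y1 where "y1 = (c / (lm - \<mu>)) *s v"
  have l: "lm - \<mu> \<noteq> 0" using assms(4) by auto
  have f1: "f y1 = lm *s y1" unfolding y1_def lin(2)[OF assms(1)] assms(2) by (simp add: mult.commute)
  have "f (y - y1) = \<mu> *s (y - y1)"
  proof -
    have "f (y - y1) = f y - f y1" by (rule lin(3)[OF assms(1)])
    also have "\<dots> = \<mu> *s y + c *s v - lm *s y1" using assms(3) f1 by (simp add: algebra_simps)
    also have "\<dots> = \<mu> *s y - \<mu> *s y1"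
    proof -
      have "c *s v - lm *s y1 = - (\<mu> *s y1)"
      proof -
        have "c *s v - lm *s y1 = (c - lm * (c / (lm - \<mu>))) *s v"
          unfolding y1_def by (simp add: algebra_simps)
        also have "c - lm * (c / (lm - \<mu>)) = - (\<mu> * (c / (lm - \<mu>)))"
          using l by (simp add: field_simps)
        finally show ?thesis unfolding y1_def by simp
      qed
      then show ?thesis by (simp add: algebra_simps)
    qed
    finally show ?thesis by (simp add: algebra_simps)
  qed
  then show ?thesis using f1 unfolding eigsp_def by (intro exI[of _ y1] exI[of _ "y - y1"]) auto
qed

lemma eig_shift:
  assumes "Vector_Spaces.linear scale scale f" "x \<in> span (\<Union>j\<in>I. eigsp scale f (lam j))"
  shows "f x - \<mu> *s x \<in> span (\<Union>j\<in>{j\<in>I. lam j \<noteq> \<mu>}. eigsp scale f (lam j))"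
proof (rule lin_span[OF lin_shift[OF assms(1)] _ subspace_span assms(2)])
  fix x assume "x \<in> (\<Union>j\<in>I. eigsp scale f (lam j))"
  then obtain j where j: "j \<in> I" "f x = lam j *s x" unfolding eigsp_def by auto
  show "f x - \<mu> *s x \<in> span (\<Union>j\<in>{j\<in>I. lam j \<noteq> \<mu>}. eigsp scale f (lam j))"
  proof (cases "lam j = \<mu>")
    case True then show ?thesis using j by (simp add: span_zero)
  next
    case False
    have "f x - \<mu> *s x = (lam j - \<mu>) *s x" using j by (simp add: algebra_simps)
    moreover have "(lam j - \<mu>) *s x \<in> eigsp scale f (lam j)"
      using subspace_scale[OF eig_sub[OF assms(1)]] j unfolding eigsp_def by auto
    ultimately show ?thesis using False j by (intro span_base) auto
  qed
qed

lemma eig_indep: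
  assumes "Vector_Spaces.linear scale scale f" "finite J" "\<forall>j\<in>J. lam j \<noteq> \<mu>"
    "f v = \<mu> *s v" "v \<in> span (\<Union>j\<in>J. eigsp scale f (lam j))"
  shows "v = 0"
  using assms(2-5)
proof (induction J arbitrary: v rule: finite_induct)
  case empty then show ?case by simp
next
  case (insert j J)
  have "f v - lam j *s v \<in> span (\<Union>i\<in>{i\<in>insert j J. lam i \<noteq> lam j}. eigsp scale f (lam i))"
    by (rule eig_shift[OF assms(1) insert.prems(3)])
  moreover have "span (\<Union>i\<in>{i\<in>insert j J. lam i \<noteq> lam j}. eigsp scale f (lam i))
      \<subseteq> span (\<Union>i\<in>J. eigsp scale f (lam i))" by (intro span_mono) auto
  ultimately have m: "(\<mu> - lam j) *s v \<in> span (\<Union>i\<in>J. eigsp scale f (lam i))"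
    using insert.prems(2) by (auto simp: algebra_simps)
  have "f ((\<mu> - lam j) *s v) = \<mu> *s ((\<mu> - lam j) *s v)"
    using lin(2)[OF assms(1)] insert.prems(2) by (simp add: mult.commute)
  then have "(\<mu> - lam j) *s v = 0" using insert.IH[OF _ _ m] insert.prems(1) by auto
  then show ?case using insert.prems(1) by auto
qed

lemma lin_comb:
  assumes "Vector_Spaces.linear scale scale f" "Vector_Spaces.linear scale scale g"
  shows "Vector_Spaces.linear scale scale (\<lambda>x. c1 *s f x - c2 *s g x - c3 *s x)"
  apply (subst Vector_Spaces.linear_iff)
  using vector_space_axioms lin[OF assms(1)] lin[OF assms(2)]
  by (auto simp: algebra_simps scale_left_commute)

lemma eq_on_span:
  assumes "Vector_Spaces.linear scale scale f" "Vector_Spaces.linear scale scale g" "span S = UNIV"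
    "\<And>x. x \<in> S \<Longrightarrow> c1 *s f x - c2 *s g x = c3 *s x"
  shows "c1 *s f v - c2 *s g v = c3 *s v"
proof -
  have "subspace {x. c1 *s f x - c2 *s g x - c3 *s x = 0}"
    by (rule module_hom.subspace_kernel[OF module_hom_linearI[OF lin_comb[OF assms(1,2)]]])
  then have "c1 *s f v - c2 *s g v - c3 *s v = 0"
    using span_induct[of v S "\<lambda>x. c1 *s f x - c2 *s g x - c3 *s x = 0"] assms(3,4) by auto
  then show ?thesis by simp
qed

end


locale tds = vector_space scale for scale :: "'k::field \<Rightarrow> 'v::ab_group_add \<Rightarrow> 'v" (infixr \<open>*s\<close> 75) +
  fixes A As B Bs Ks :: "'v \<Rightarrow> 'v"
    and d :: nat
    and q a as b bs :: 'k
  assumes q_nz: "q \<noteq> 0"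
    and q_not_root: "\<forall>n::nat. 0 < n \<longrightarrow> q ^ n \<noteq> 1"
    and a_nz: "a \<noteq> 0" and as_nz: "as \<noteq> 0"
    and TD: "tridiagonal_pair_std scale A As d
               (\<lambda>i. a * q powi (2 * int i - int d)) (\<lambda>i. as * q powi (int d - 2 * int i))"
    and dec1: "is_decomposition scale d (\<lambda>i.
               ssum scale {..i} (\<lambda>j. eigsp scale As (as * q powi (int d - 2 * int j)))
             \<inter> ssum scale {..d - i} (\<lambda>j. eigsp scale A (a * q powi (2 * int j - int d))))"
    and dec2: "is_decomposition scale d (\<lambda>i.
               ssum scale {d - i..d} (\<lambda>j. eigsp scale As (as * q powi (int d - 2 * int j)))
             \<inter> ssum scale {i..d} (\<lambda>j. eigsp scale A (a * q powi (2 * int j - int d))))"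
    and dec3: "is_decomposition scale d (\<lambda>i.
               ssum scale {d - i..d} (\<lambda>j. eigsp scale As (as * q powi (int d - 2 * int j)))
             \<inter> ssum scale {..d - i} (\<lambda>j. eigsp scale A (a * q powi (2 * int j - int d))))"
    and B_lin: "Vector_Spaces.linear scale scale B"
    and B_def: "\<forall>i\<le>d. \<forall>v \<in>
               ssum scale {..i} (\<lambda>j. eigsp scale As (as * q powi (int d - 2 * int j)))
             \<inter> ssum scale {..d - i} (\<lambda>j. eigsp scale A (a * q powi (2 * int j - int d))).
               B v = scale (b * q powi (2 * int i - int d)) v"
    and Bs_lin: "Vector_Spaces.linear scale scale Bs"
    and Bs_def: "\<forall>i\<le>d. \<forall>v \<in>
               ssum scale {d - i..d} (\<lambda>j. eigsp scale As (as * q powi (int d - 2 * int j)))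
             \<inter> ssum scale {i..d} (\<lambda>j. eigsp scale A (a * q powi (2 * int j - int d))).
               Bs v = scale (bs * q powi (int d - 2 * int i)) v"
    and Ks_lin: "Vector_Spaces.linear scale scale Ks"
    and Ks_def: "\<forall>i\<le>d. \<forall>v \<in>
               ssum scale {d - i..d} (\<lambda>j. eigsp scale As (as * q powi (int d - 2 * int j)))
             \<inter> ssum scale {..d - i} (\<lambda>j. eigsp scale A (a * q powi (2 * int j - int d))).
               Ks v = scale (q powi (2 * int i - int d)) v"
begin

abbreviation th :: "nat \<Rightarrow> 'k" where "th j \<equiv> a * q powi (2 * int j - int d)"
abbreviation ths :: "nat \<Rightarrow> 'k" where "ths j \<equiv> as * q powi (int d - 2 * int j)"
abbreviation Va :: "nat \<Rightarrow> 'v set" where "Va j \<equiv> eigsp scale A (th j)"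
abbreviation Vs :: "nat \<Rightarrow> 'v set" where "Vs j \<equiv> eigsp scale As (ths j)"
abbreviation U :: "nat \<Rightarrow> 'v set" where "U i \<equiv> ssum scale {d - i..d} Vs \<inter> ssum scale {..d - i} Va"
abbreviation W :: "nat \<Rightarrow> 'v set" where "W i \<equiv> ssum scale {..i} Vs \<inter> ssum scale {..d - i} Va"
abbreviation X :: "nat \<Rightarrow> 'v set" where "X i \<equiv> ssum scale {d - i..d} Vs \<inter> ssum scale {i..d} Va"
abbreviation Y :: "nat \<Rightarrow> 'v set" where "Y k \<equiv> ssum scale {k..d} Vs \<inter> ssum scale {..<k} Va"

lemmas TDc = TD[unfolded tridiagonal_pair_std_def]
lemma A_lin: "Vector_Spaces.linear scale scale A" by (rule TDc[THEN conjunct1])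
lemma As_lin: "Vector_Spaces.linear scale scale As" by (rule TDc[THEN conjunct2, THEN conjunct1])
lemma inj_th: "inj_on th {..d}"
  by (rule TDc[THEN conjunct2, THEN conjunct2, THEN conjunct2, THEN conjunct2, THEN conjunct1])
lemma eig_th: "\<And>i. i \<le> d \<Longrightarrow> is_eigenvalue scale A (th i)"
  using TDc[THEN conjunct2, THEN conjunct2, THEN conjunct2, THEN conjunct2, THEN conjunct2, THEN conjunct1] by blast
lemma trid1: "\<And>i. i \<le> d \<Longrightarrow> As ` Va i \<subseteq> ssum scale ({i - 1..i + 1} \<inter> {..d}) Va"
  using TDc[THEN conjunct2, THEN conjunct2, THEN conjunct2, THEN conjunct2, THEN conjunct2, THEN conjunct2,
     THEN conjunct2, THEN conjunct2, THEN conjunct2, THEN conjunct2, THEN conjunct1] by blast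
lemma trid2: "\<And>i. i \<le> d \<Longrightarrow> A ` Vs i \<subseteq> ssum scale ({i - 1..i + 1} \<inter> {..d}) Vs"
  using TDc[THEN conjunct2, THEN conjunct2, THEN conjunct2, THEN conjunct2, THEN conjunct2, THEN conjunct2,
     THEN conjunct2, THEN conjunct2, THEN conjunct2, THEN conjunct2, THEN conjunct2, THEN conjunct1] by blast
lemma irred: "\<And>S. subspace S \<Longrightarrow> A ` S \<subseteq> S \<Longrightarrow> As ` S \<subseteq> S \<Longrightarrow> S = {0} \<or> S = UNIV"
  using TDc[THEN conjunct2, THEN conjunct2, THEN conjunct2, THEN conjunct2, THEN conjunct2, THEN conjunct2,
     THEN conjunct2, THEN conjunct2, THEN conjunct2, THEN conjunct2, THEN conjunct2, THEN conjunct2] by blast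

lemma q2: "q ^ 2 \<noteq> 1" using q_not_root by auto

lemma qq: "q - inverse q \<noteq> 0"
proof
  assume "q - inverse q = 0"
  then have "q * q = q * inverse q" by simp
  then have "q ^ 2 = 1" using q_nz by (simp add: power2_eq_square)
  then show False using q2 by simp
qed

lemma Qmul: "q powi m * q powi n = q powi (m + n)"
  using q_nz by (simp add: power_int_add)
lemma Qq: "q * q powi m = q powi (m + 1)"
  using q_nz by (simp add: power_int_add)
lemma Qiq: "inverse q * q powi m = q powi (m - 1)"
  using q_nz by (simp add: power_int_diff field_simps)
lemma Q2: "q powi (m + 2) \<noteq> q powi m"
proof
  assume "q powi (m + 2) = q powi m"
  then have "q powi m * q ^ 2 = q powi m * 1" using q_nz by (simp add: power_int_add)
  then show False using q2 q_nz by simp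
qed

lemma ssum_mono: "I \<subseteq> J \<Longrightarrow> ssum scale I V \<subseteq> ssum scale J V"
  unfolding ssum_def by (intro span_mono) auto

lemma ssum_sub [iff]: "subspace (ssum scale I V)"
  unfolding ssum_def by simp

lemma ssum_base: "j \<in> I \<Longrightarrow> x \<in> V j \<Longrightarrow> x \<in> ssum scale I V"
  unfolding ssum_def by (intro span_base) auto

lemma ssum_empty: "I = {} \<Longrightarrow> ssum scale I V = {0}"
  unfolding ssum_def by simp

lemma A_map: assumes "x \<in> ssum scale I Vs" "I \<subseteq> {..d}" "\<And>j. j \<in> I \<Longrightarrow> {j - 1..j + 1} \<inter> {..d} \<subseteq> J"
  shows "A x \<in> ssum scale J Vs"
  using assms(1) unfolding ssum_def[of _ I]
proof (rule lin_span[OF A_lin _ ssum_sub, rotated])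
  fix y assume "y \<in> (\<Union>j\<in>I. Vs j)"
  then obtain j where j: "j \<in> I" "y \<in> Vs j" by blast
  then have "A y \<in> ssum scale ({j - 1..j + 1} \<inter> {..d}) Vs" using trid2[of j] assms(2) by blast
  then show "A y \<in> ssum scale J Vs" using ssum_mono[OF assms(3)[OF j(1)]] by blast
qed

lemma As_map: assumes "x \<in> ssum scale I Va" "I \<subseteq> {..d}" "\<And>j. j \<in> I \<Longrightarrow> {j - 1..j + 1} \<inter> {..d} \<subseteq> J"
  shows "As x \<in> ssum scale J Va"
  using assms(1) unfolding ssum_def[of _ I]
proof (rule lin_span[OF As_lin _ ssum_sub, rotated])
  fix y assume "y \<in> (\<Union>j\<in>I. Va j)"
  then obtain j where j: "j \<in> I" "y \<in> Va j" by blast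
  then have "As y \<in> ssum scale ({j - 1..j + 1} \<inter> {..d}) Va" using trid1[of j] assms(2) by blast
  then show "As y \<in> ssum scale J Va" using ssum_mono[OF assms(3)[OF j(1)]] by blast
qed

lemma A_shift: assumes "x \<in> ssum scale I Va" "{j\<in>I. th j \<noteq> \<mu>} \<subseteq> J"
  shows "A x - \<mu> *s x \<in> ssum scale J Va"
  using eig_shift[OF A_lin, where x=x and I=I and lam=th and \<mu>=\<mu>] assms ssum_mono[OF assms(2), of Va]
  unfolding ssum_def by blast

lemma As_shift: assumes "x \<in> ssum scale I Vs" "{j\<in>I. ths j \<noteq> \<mu>} \<subseteq> J"
  shows "As x - \<mu> *s x \<in> ssum scale J Vs"
  using eig_shift[OF As_lin, where x=x and I=I and lam=ths and \<mu>=\<mu>] assms ssum_mono[OF assms(2), of Vs]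
  unfolding ssum_def by blast

end


context tds
begin

lemma Y_sub: "subspace (Y k)" by (intro subspace_inter ssum_sub)

lemma Y_zero: assumes "1 \<le> k" "k \<le> d" shows "Y k = {0}"
proof -
  define S where "S = span (\<Union>k\<in>{1..d}. Y k)"
  have SA: "A y \<in> S" if y: "y \<in> Y k" and k: "1 \<le> k" "k \<le> d" for y k
  proof -
    have sub: "{j\<in>{..<k}. th j \<noteq> th (k - 1)} \<subseteq> {..<k - 1}"
    proof
      fix j assume "j \<in> {j\<in>{..<k}. th j \<noteq> th (k - 1)}"
      then have "j < k" "th j \<noteq> th (k - 1)" by blast+
      then have "j < k" "j \<noteq> k - 1" by blast+
      then show "j \<in> {..<k - 1}" by auto
    qed
    have c1: "A y - th (k - 1) *s y \<in> ssum scale {..<k - 1} Va"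
      by (rule A_shift[of y "{..<k}", OF _ sub]) (use y in auto)
    moreover have c2: "A y - th (k - 1) *s y \<in> ssum scale {k - 1..d} Vs"
    proof -
      have "A y \<in> ssum scale {k - 1..d} Vs" by (rule A_map[of y "{k..d}"]) (use y in auto)
      moreover have "y \<in> ssum scale {k - 1..d} Vs" using y ssum_mono[of "{k..d}" "{k - 1..d}"] by auto
      ultimately show ?thesis by (intro subspace_diff[OF ssum_sub] subspace_scale[OF ssum_sub])
    qed
    ultimately have m: "A y - th (k - 1) *s y \<in> S"
    proof (cases "k = 1")
      case True
      then show ?thesis using c1 ssum_empty[of "{..<k - 1}"] span_zero[of "\<Union>k\<in>{1..d}. Y k"]
        unfolding S_def by auto
    next
      case False
      then have "A y - th (k - 1) *s y \<in> Y (k - 1)" using c1 c2 by auto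
      then show ?thesis unfolding S_def using False k by (intro span_base UN_I[where a="k - 1"]) auto
    qed
    have "y \<in> S" unfolding S_def using y k by (intro span_base) auto
    then have "th (k - 1) *s y \<in> S" unfolding S_def by (rule span_scale)
    with m have "(A y - th (k - 1) *s y) + th (k - 1) *s y \<in> S" unfolding S_def by (rule span_add)
    then show ?thesis by simp
  qed
  have SAs: "As y \<in> S" if y: "y \<in> Y k" and k: "1 \<le> k" "k \<le> d" for y k
  proof -
    have sub: "{j\<in>{k..d}. ths j \<noteq> ths k} \<subseteq> {k + 1..d}"
    proof
      fix j assume "j \<in> {j\<in>{k..d}. ths j \<noteq> ths k}"
      then have "k \<le> j" "j \<le> d" "ths j \<noteq> ths k" by auto
      then have "k \<le> j" "j \<le> d" "j \<noteq> k" by blast+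
      then show "j \<in> {k + 1..d}" by auto
    qed
    have c1: "As y - ths k *s y \<in> ssum scale {k + 1..d} Vs"
      by (rule As_shift[of y "{k..d}", OF _ sub]) (use y in auto)
    moreover have c2: "As y - ths k *s y \<in> ssum scale {..<k + 1} Va"
    proof -
      have "As y \<in> ssum scale {..<k + 1} Va" by (rule As_map[of y "{..<k}"]) (use y k in auto)
      moreover have "y \<in> ssum scale {..<k + 1} Va" using y ssum_mono[of "{..<k}" "{..<k + 1}"] by auto
      ultimately show ?thesis by (intro subspace_diff[OF ssum_sub] subspace_scale[OF ssum_sub])
    qed
    ultimately have m: "As y - ths k *s y \<in> S"
    proof (cases "k = d")
      case True
      then show ?thesis using c1 ssum_empty[of "{k + 1..d}"] span_zero[of "\<Union>k\<in>{1..d}. Y k"]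
        unfolding S_def by auto
    next
      case False
      then have "As y - ths k *s y \<in> Y (k + 1)" using c1 c2 by auto
      then show ?thesis unfolding S_def using False k by (intro span_base UN_I[where a="k + 1"]) auto
    qed
    have "y \<in> S" unfolding S_def using y k by (intro span_base) auto
    then have "ths k *s y \<in> S" unfolding S_def by (rule span_scale)
    with m have "(As y - ths k *s y) + ths k *s y \<in> S" unfolding S_def by (rule span_add)
    then show ?thesis by simp
  qed
  have "A ` S \<subseteq> S"
  proof
    fix x assume "x \<in> A ` S"
    then obtain y where y: "y \<in> S" "x = A y" by auto
    have "A y \<in> span (\<Union>k\<in>{1..d}. Y k)" using y(1) unfolding S_def
    proof (rule lin_span[OF A_lin _ subspace_span, rotated])
      fix z assume "z \<in> (\<Union>k\<in>{1..d}. Y k)"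
      then obtain k where "k \<in> {1..d}" "z \<in> Y k" by blast
      then show "A z \<in> span (\<Union>k\<in>{1..d}. Y k)" using SA[of z k] unfolding S_def by auto
    qed
    then show "x \<in> S" using y unfolding S_def by simp
  qed
  moreover have "As ` S \<subseteq> S"
  proof
    fix x assume "x \<in> As ` S"
    then obtain y where y: "y \<in> S" "x = As y" by auto
    have "As y \<in> span (\<Union>k\<in>{1..d}. Y k)" using y(1) unfolding S_def
    proof (rule lin_span[OF As_lin _ subspace_span, rotated])
      fix z assume "z \<in> (\<Union>k\<in>{1..d}. Y k)"
      then obtain k where "k \<in> {1..d}" "z \<in> Y k" by blast
      then show "As z \<in> span (\<Union>k\<in>{1..d}. Y k)" using SAs[of z k] unfolding S_def by auto
    qed
    then show "x \<in> S" using y unfolding S_def by simp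
  qed
  ultimately have S01: "S = {0} \<or> S = UNIV" using irred[of S] unfolding S_def by auto
  have "S \<subseteq> ssum scale {..<d} Va"
    unfolding S_def
  proof (rule span_minimal[OF _ ssum_sub])
    show "(\<Union>k\<in>{1..d}. Y k) \<subseteq> ssum scale {..<d} Va"
      using ssum_mono[of "{..<_}" "{..<d}" Va] by fastforce
  qed
  moreover obtain v where v: "v \<noteq> 0" "A v = th d *s v" using eig_th[of d] unfolding is_eigenvalue_def by auto
  moreover have ne: "\<forall>j\<in>{..<d}. th j \<noteq> th d"
  proof
    fix j assume "j \<in> {..<d}"
    then have "j \<in> {..d}" "d \<in> {..d}" "j \<noteq> d" by auto
    then show "th j \<noteq> th d" using inj_on_contraD[OF inj_th] by metis
  qed
  moreover have "v \<in> ssum scale {..<d} Va \<Longrightarrow> v = 0"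
    unfolding ssum_def
    by (rule eig_indep[OF A_lin, where J="{..<d}" and lam=th and \<mu>="th d"])
      (use v ne in auto)
  ultimately have "S = {0}" using S01 by auto
  moreover have "Y k \<subseteq> S" unfolding S_def using assms by (auto intro!: span_base UN_I[where a=k])
  moreover have "0 \<in> Y k" using Y_sub subspace_0 by blast
  ultimately show ?thesis by auto
qed


lemma U_sub: "i \<le> d \<Longrightarrow> subspace (U i)"
  using dec3 unfolding is_decomposition_def by blast
lemma U_span: "span (\<Union>i\<in>{..d}. U i) = UNIV"
  using dec3 unfolding is_decomposition_def ssum_def[of _ "{..d}"] by blast
lemma U_dir: "(\<forall>i\<le>d. w i \<in> U i) \<Longrightarrow> (\<Sum>i\<le>d. w i) = 0 \<Longrightarrow> i \<le> d \<Longrightarrow> w i = 0"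
  using dec3 unfolding is_decomposition_def by blast
lemma W_sub: "i \<le> d \<Longrightarrow> subspace (W i)"
  using dec1 unfolding is_decomposition_def by blast
lemma W_span: "span (\<Union>i\<in>{..d}. W i) = UNIV"
  using dec1 unfolding is_decomposition_def ssum_def[of _ "{..d}"] by blast
lemma X_sub: "i \<le> d \<Longrightarrow> subspace (X i)"
  using dec2 unfolding is_decomposition_def by blast
lemma X_span: "span (\<Union>i\<in>{..d}. X i) = UNIV"
  using dec2 unfolding is_decomposition_def ssum_def[of _ "{..d}"] by blast

lemma U_rep: "\<exists>u. (\<forall>j\<in>{..d}. u j \<in> U j) \<and> x = sum u {..d}"
  by (rule sum_rep[where U=U]) (use U_sub U_span in auto)

lemma H1: assumes "i \<le> d" "x \<in> ssum scale {..d - i} Va"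
  shows "\<exists>u. (\<forall>j\<in>{..d}. u j \<in> U j) \<and> x = sum u {i..d}"
proof -
  obtain u where u: "\<forall>j\<in>{..d}. u j \<in> U j" "x = sum u {..d}" using U_rep by blast
  have "{..d} = {..<i} \<union> {i..d}" using assms(1) by auto
  then have split: "sum u {..d} = sum u {..<i} + sum u {i..d}"
    by (simp add: sum.union_disjoint ivl_disj_int)
  have r: "sum u {i..d} \<in> ssum scale {..d - i} Va"
  proof (rule subspace_sum[OF ssum_sub])
    fix j assume j: "j \<in> {i..d}"
    then have "u j \<in> ssum scale {..d - j} Va" using u(1) by auto
    moreover have "ssum scale {..d - j} Va \<subseteq> ssum scale {..d - i} Va" using j by (intro ssum_mono) auto
    ultimately show "u j \<in> ssum scale {..d - i} Va" by blast
  qed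
  have "sum u {..<i} = 0"
  proof (cases "i = 0")
    case True then show ?thesis by simp
  next
    case False
    have p1: "sum u {..<i} \<in> ssum scale {d - i + 1..d} Vs"
    proof (rule subspace_sum[OF ssum_sub])
      fix j assume j: "j \<in> {..<i}"
      then have "u j \<in> ssum scale {d - j..d} Vs" using u(1) assms(1) by auto
      moreover have "ssum scale {d - j..d} Vs \<subseteq> ssum scale {d - i + 1..d} Vs" using j assms(1) by (intro ssum_mono) auto
      ultimately show "u j \<in> ssum scale {d - i + 1..d} Vs" by blast
    qed
    have "sum u {..<i} = x - sum u {i..d}" using u(2) split by simp
    also have "\<dots> \<in> ssum scale {..d - i} Va" using assms(2) r by (intro subspace_diff[OF ssum_sub])
    finally have p2: "sum u {..<i} \<in> ssum scale {..<d - i + 1} Va" by (simp add: lessThan_Suc_atMost)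
    have "Y (d - i + 1) = {0}" using False assms(1) by (intro Y_zero) auto
    then show ?thesis using p1 p2 by blast
  qed
  then show ?thesis using u split by auto
qed

lemma H2: assumes "i \<le> d" "x \<in> ssum scale {d - i..d} Vs"
  shows "\<exists>u. (\<forall>j\<in>{..d}. u j \<in> U j) \<and> x = sum u {..i}"
proof -
  obtain u where u: "\<forall>j\<in>{..d}. u j \<in> U j" "x = sum u {..d}" using U_rep by blast
  have "{..d} = {..i} \<union> {i<..d}" using assms(1) by auto
  then have split: "sum u {..d} = sum u {..i} + sum u {i<..d}"
    by (simp add: sum.union_disjoint ivl_disj_int)
  have r: "sum u {..i} \<in> ssum scale {d - i..d} Vs"
  proof (rule subspace_sum[OF ssum_sub])
    fix j assume j: "j \<in> {..i}"
    then have "u j \<in> ssum scale {d - j..d} Vs" using u(1) assms(1) by auto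
    moreover have "ssum scale {d - j..d} Vs \<subseteq> ssum scale {d - i..d} Vs" using j by (intro ssum_mono) auto
    ultimately show "u j \<in> ssum scale {d - i..d} Vs" by blast
  qed
  have "sum u {i<..d} = 0"
  proof (cases "i = d")
    case True then show ?thesis by simp
  next
    case False
    have p1: "sum u {i<..d} \<in> ssum scale {..<d - i} Va"
    proof (rule subspace_sum[OF ssum_sub])
      fix j assume j: "j \<in> {i<..d}"
      then have "u j \<in> ssum scale {..d - j} Va" using u(1) by auto
      moreover have "ssum scale {..d - j} Va \<subseteq> ssum scale {..<d - i} Va" using j assms(1) by (intro ssum_mono) auto
      ultimately show "u j \<in> ssum scale {..<d - i} Va" by blast
    qed
    have "sum u {i<..d} = x - sum u {..i}" using u(2) split by simp
    also have "\<dots> \<in> ssum scale {d - i..d} Vs" using assms(2) r by (intro subspace_diff[OF ssum_sub])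
    finally have p2: "sum u {i<..d} \<in> ssum scale {d - i..d} Vs" .
    have "Y (d - i) = {0}" using False assms(1) by (intro Y_zero) auto
    then show ?thesis using p1 p2 by blast
  qed
  then show ?thesis using u split by auto
qed

lemma Qnz: "q powi m \<noteq> 0" using q_nz by simp

lemma Ks_U: "i \<le> d \<Longrightarrow> u \<in> U i \<Longrightarrow> Ks u = q powi (2 * int i - int d) *s u"
  using Ks_def by blast

lemma Ks_inj: "inj Ks"
proof -
  have "v = 0" if v: "Ks v = 0" for v
  proof -
    obtain u where u: "\<forall>j\<in>{..d}. u j \<in> U j" "v = sum u {..d}" using U_rep by blast
    have "Ks v = (\<Sum>j\<le>d. q powi (2 * int j - int d) *s u j)"
      using u by (simp add: lin(5)[OF Ks_lin] Ks_U)
    then have z: "(\<Sum>j\<le>d. q powi (2 * int j - int d) *s u j) = 0" using v by simp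
    have "q powi (2 * int j - int d) *s u j = 0" if j: "j \<le> d" for j
      by (rule U_dir[OF _ z j]) (use u U_sub subspace_scale in auto)
    then have "u j = 0" if "j \<le> d" for j using that q_nz by auto
    then show ?thesis using u by simp
  qed
  then show ?thesis
    using module_hom.inj_iff_eq_0[OF module_hom_linearI[OF Ks_lin]] by blast
qed

lemma Ks_Uinv: assumes "i \<le> d" "u \<in> U i" shows "Ks (q powi (int d - 2 * int i) *s u) = u"
proof -
  have "q powi (int d - 2 * int i) *s u \<in> U i" using assms U_sub subspace_scale by blast
  then have "Ks (q powi (int d - 2 * int i) *s u) = (q powi (2 * int i - int d) * q powi (int d - 2 * int i)) *s u"
    using Ks_U[OF assms(1)] by simp
  also have "q powi (2 * int i - int d) * q powi (int d - 2 * int i) = 1" by (simp add: Qmul)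
  finally show ?thesis by simp
qed

lemma iK_U: assumes "i \<le> d" "u \<in> U i" shows "inv Ks u = q powi (int d - 2 * int i) *s u"
  using Ks_Uinv[OF assms] Ks_inj by (metis inv_f_f)

lemma Ks_surj: "surj Ks"
proof -
  have "v \<in> range Ks" for v
  proof -
    obtain u where u: "\<forall>j\<in>{..d}. u j \<in> U j" "v = sum u {..d}" using U_rep by blast
    have "Ks (\<Sum>j\<le>d. q powi (int d - 2 * int j) *s u j) = v"
      using u by (simp add: lin(5)[OF Ks_lin] Ks_Uinv)
    then show ?thesis by (metis rangeI)
  qed
  then show ?thesis by auto
qed

lemma iK_lin: "Vector_Spaces.linear scale scale (inv Ks)"
proof -
  have add: "inv Ks (x + y) = inv Ks x + inv Ks y" for x y
  proof -
    have "Ks (inv Ks x + inv Ks y) = x + y"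
      using lin(1)[OF Ks_lin] Ks_surj by (simp add: surj_f_inv_f)
    then show ?thesis using Ks_inj by (metis inv_f_f)
  qed
  have sc: "inv Ks (c *s x) = c *s inv Ks x" for c x
  proof -
    have "Ks (c *s inv Ks x) = c *s x"
      using lin(2)[OF Ks_lin] Ks_surj by (simp add: surj_f_inv_f)
    then show ?thesis using Ks_inj by (metis inv_f_f)
  qed
  show ?thesis apply (subst Vector_Spaces.linear_iff) using vector_space_axioms add sc by auto
qed


lemma lin_o: "Vector_Spaces.linear scale scale f \<Longrightarrow> Vector_Spaces.linear scale scale g
  \<Longrightarrow> Vector_Spaces.linear scale scale (\<lambda>x. f (g x))"
  using Vector_Spaces.linear_compose[of scale scale g scale f] by (simp add: o_def)

lemma sA: "q * q powi m - inverse q * q powi (m + 2) = 0"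
  by (simp add: Qq Qiq add.commute)

lemma sB: "q powi m * q powi (- m) = 1"
  by (simp add: Qmul)

lemma C1_U: assumes i: "i \<le> d" and u: "u \<in> U i"
  shows "q *s A (Ks u) - inverse q *s Ks (A u) = ((q - inverse q) * a) *s u"
proof -
  define t where "t = th (d - i)"
  define Q1 where "Q1 = q powi (2 * int i - int d)"
  define Q2 where "Q2 = q powi (2 * int (i + 1) - int d)"
  define w where "w = A u - t *s u"
  have Au: "A u = t *s u + w" unfolding w_def by simp
  have sub: "{j\<in>{..d - i}. th j \<noteq> th (d - i)} \<subseteq> {..<d - i}"
  proof
    fix j assume "j \<in> {j\<in>{..d - i}. th j \<noteq> th (d - i)}"
    then have "j \<le> d - i" "th j \<noteq> th (d - i)" by auto
    then have "j \<le> d - i" "j \<noteq> d - i" by blast+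
    then show "j \<in> {..<d - i}" by auto
  qed
  have w1: "w \<in> ssum scale {..<d - i} Va"
    unfolding w_def t_def by (rule A_shift[OF _ sub]) (use u in auto)
  have Kw: "Ks w = Q2 *s w"
  proof (cases "i = d")
    case True
    then have "w = 0" using w1 ssum_empty[of "{..<d - i}"] by auto
    then show ?thesis by (simp add: lin(4)[OF Ks_lin])
  next
    case False
    have "A u \<in> ssum scale {d - (i + 1)..d} Vs" by (rule A_map[of u "{d - i..d}"]) (use u in auto)
    moreover have "{d - i..d} \<subseteq> {d - (i + 1)..d}" by auto
    then have "u \<in> ssum scale {d - (i + 1)..d} Vs"
      using u ssum_mono[of "{d - i..d}" "{d - (i + 1)..d}" Vs] by blast
    ultimately have "w \<in> ssum scale {d - (i + 1)..d} Vs" unfolding w_def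
      by (intro subspace_diff[OF ssum_sub] subspace_scale[OF ssum_sub])
    moreover have "w \<in> ssum scale {..d - (i + 1)} Va"
      using w1 False i by (metis Suc_diff_Suc Suc_eq_plus1 le_neq_implies_less lessThan_Suc_atMost)
    ultimately show ?thesis unfolding Q2_def using Ks_U[of "i + 1" w] False i by auto
  qed
  have Ku: "Ks u = Q1 *s u" unfolding Q1_def using Ks_U[OF i u] .
  have Q1t: "Q1 * t = a"
  proof -
    have e: "2 * int (d - i) - int d = int d - 2 * int i" using i by (simp add: of_nat_diff)
    have "Q1 * t = a * (q powi (2 * int i - int d) * q powi (int d - 2 * int i))"
      unfolding Q1_def t_def e by (simp add: ac_simps)
    also have "q powi (2 * int i - int d) * q powi (int d - 2 * int i) = 1" by (simp add: Qmul)
    finally show ?thesis by simp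
  qed
  have "q *s A (Ks u) - inverse q *s Ks (A u)
      = (q * Q1 * t - inverse q * t * Q1) *s u + (q * Q1 - inverse q * Q2) *s w"
    by (simp add: Ku Au lin[OF A_lin] lin[OF Ks_lin] Kw algebra_simps)
  also have "q * Q1 * t - inverse q * t * Q1 = (q - inverse q) * a" by (simp add: Q1t[symmetric] algebra_simps)
  also have "q * Q1 - inverse q * Q2 = 0"
  proof -
    have "2 * int (i + 1) - int d = (2 * int i - int d) + 2" by simp
    then show ?thesis unfolding Q1_def Q2_def using sA by metis
  qed
  finally show ?thesis by simp
qed

lemma C3_U: assumes i: "i \<le> d" and u: "u \<in> U i"
  shows "q *s As (inv Ks u) - inverse q *s inv Ks (As u) = ((q - inverse q) * as) *s u"
proof -
  define t where "t = ths (d - i)"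
  define P1 where "P1 = q powi (int d - 2 * int i)"
  define P2 where "P2 = q powi ((int d - 2 * int i) + 2)"
  define w where "w = As u - t *s u"
  have Au: "As u = t *s u + w" unfolding w_def by simp
  have sub: "{j\<in>{d - i..d}. ths j \<noteq> ths (d - i)} \<subseteq> {d - i + 1..d}"
  proof
    fix j assume "j \<in> {j\<in>{d - i..d}. ths j \<noteq> ths (d - i)}"
    then have "d - i \<le> j" "j \<le> d" "ths j \<noteq> ths (d - i)" by auto
    then have "d - i \<le> j" "j \<le> d" "j \<noteq> d - i" by blast+
    then show "j \<in> {d - i + 1..d}" by auto
  qed
  have w1: "w \<in> ssum scale {d - i + 1..d} Vs"
    unfolding w_def t_def by (rule As_shift[OF _ sub]) (use u in auto)
  have Kw: "inv Ks w = P2 *s w"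
  proof (cases "i = 0")
    case True
    then have "w = 0" using w1 ssum_empty[of "{d - i + 1..d}"] by auto
    then show ?thesis by (simp add: lin(4)[OF iK_lin])
  next
    case False
    have "As u \<in> ssum scale {..d - (i - 1)} Va" by (rule As_map[of u "{..d - i}"]) (use u False i in auto)
    moreover have "{..d - i} \<subseteq> {..d - (i - 1)}" by auto
    then have "u \<in> ssum scale {..d - (i - 1)} Va"
      using u ssum_mono[of "{..d - i}" "{..d - (i - 1)}" Va] by blast
    ultimately have "w \<in> ssum scale {..d - (i - 1)} Va" unfolding w_def
      by (intro subspace_diff[OF ssum_sub] subspace_scale[OF ssum_sub])
    moreover have "w \<in> ssum scale {d - (i - 1)..d} Vs"
      using w1 False i by (metis Suc_diff_le Suc_eq_plus1 Suc_pred' diff_Suc_Suc gr0I le_add_diff_inverse2 add_le_imp_le_diff)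
    ultimately have "inv Ks w = q powi (int d - 2 * int (i - 1)) *s w"
      using False i by (intro iK_U) auto
    moreover have e: "int d - 2 * int (i - 1) = (int d - 2 * int i) + 2" using False by (simp add: of_nat_diff)
    ultimately show ?thesis unfolding P2_def by metis
  qed
  have Ku: "inv Ks u = P1 *s u" unfolding P1_def using iK_U[OF i u] .
  have P1t: "P1 * t = as"
  proof -
    have e: "int d - 2 * int (d - i) = 2 * int i - int d" using i by (simp add: of_nat_diff)
    have "P1 * t = as * (q powi (int d - 2 * int i) * q powi (2 * int i - int d))"
      unfolding P1_def t_def e by (simp add: ac_simps)
    also have "q powi (int d - 2 * int i) * q powi (2 * int i - int d) = 1" by (simp add: Qmul)
    finally show ?thesis by simp
  qed
  have "q *s As (inv Ks u) - inverse q *s inv Ks (As u)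
      = (q * P1 * t - inverse q * t * P1) *s u + (q * P1 - inverse q * P2) *s w"
    by (simp add: Ku Au lin[OF As_lin] lin[OF iK_lin] Kw algebra_simps)
  also have "q * P1 * t - inverse q * t * P1 = (q - inverse q) * as" by (simp add: P1t[symmetric] algebra_simps)
  also have "q * P1 - inverse q * P2 = 0"
    unfolding P1_def P2_def using sA by metis
  finally show ?thesis by simp
qed


lemma C1: "q *s A (Ks v) - inverse q *s Ks (A v) = ((q - inverse q) * a) *s v"
  by (rule eq_on_span[OF lin_o[OF A_lin Ks_lin] lin_o[OF Ks_lin A_lin] U_span]) (use C1_U in auto)

lemma C3: "q *s As (inv Ks v) - inverse q *s inv Ks (As v) = ((q - inverse q) * as) *s v"
  by (rule eq_on_span[OF lin_o[OF As_lin iK_lin] lin_o[OF iK_lin As_lin] U_span]) (use C3_U in auto)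

lemma step_split:
  assumes f: "Vector_Spaces.linear scale scale f" and g: "Vector_Spaces.linear scale scale g"
    and v: "f v = lm *s v" and e: "q *s f (g v) - inverse q *s g (f v) = c *s v"
    and mu: "mu = inverse q * (inverse q * lm)" and ne: "lm \<noteq> mu"
  shows "\<exists>y1 y2. g v = y1 + y2 \<and> y1 \<in> eigsp scale f lm \<and> y2 \<in> eigsp scale f mu"
proof (rule eig_split[OF f _ _ ne])
  have "q *s f (g v) - (inverse q * lm) *s g v = c *s v" using e v lin(2)[OF g] by simp
  then have "inverse q *s (q *s f (g v) - (inverse q * lm) *s g v) = inverse q *s (c *s v)" by simp
  then show "f (g v) - mu *s g v = (inverse q * c) *s v"
    using q_nz by (simp add: mu scale_right_diff_distrib mult.assoc)
qed (fact v)

lemma Qm2: "inverse q * (inverse q * q powi m) = q powi (m - 2)"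
  by (simp add: Qiq)

lemma Qne2: "q powi m \<noteq> q powi (m - 2)"
  using Q2[of "m - 2"] by auto

lemma C2_W: assumes i: "i \<le> d" and w: "w \<in> W i"
  shows "q *s inv Ks (B w) - inverse q *s B (inv Ks w) = ((q - inverse q) * b) *s w"
proof -
  define Q0 where "Q0 = q powi (int d - 2 * int i)"
  define Q1 where "Q1 = q powi (2 * int i - int d)"
  define Q2 where "Q2 = q powi ((2 * int i - int d) + 2)"
  obtain u where u: "\<forall>j\<in>{..d}. u j \<in> U j" "w = sum u {i..d}" using H1[OF i] w by blast
  define y where "y = inv Ks w"
  define z where "z = y - Q0 *s w"
  have y_eq: "y = (\<Sum>j\<in>{i..d}. q powi (int d - 2 * int j) *s u j)"
    unfolding y_def u(2) lin(5)[OF iK_lin] using u(1) by (intro sum.cong refl iK_U) auto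
  have "z = (\<Sum>j\<in>{i..d}. (q powi (int d - 2 * int j) - Q0) *s u j)"
    unfolding z_def y_eq u(2) by (simp add: scale_sum_right scale_left_diff_distrib sum_subtractf)
  also have "\<dots> = (\<Sum>j\<in>{i<..d}. (q powi (int d - 2 * int j) - Q0) *s u j)"
  proof -
    have "{i..d} = insert i {i<..d}" using i by auto
    then show ?thesis unfolding Q0_def by simp
  qed
  finally have z_eq: "z = (\<Sum>j\<in>{i<..d}. (q powi (int d - 2 * int j) - Q0) *s u j)" .
  have yVs: "y \<in> ssum scale {..i + 1} Vs"
  proof -
    have "w \<in> span (\<Union>j\<in>{..i}. Vs j)" using w unfolding ssum_def by blast
    then show ?thesis unfolding y_def
    proof (rule lin_span[OF iK_lin _ ssum_sub, rotated])
      fix v assume "v \<in> (\<Union>j\<in>{..i}. Vs j)"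
      then obtain j where j: "j \<le> i" "v \<in> Vs j" by blast
      have "\<exists>y1 y2. inv Ks v = y1 + y2 \<and> y1 \<in> Vs j \<and> y2 \<in> Vs (j + 1)"
      proof (rule step_split[OF As_lin iK_lin _ C3])
        show "As v = ths j *s v" using j unfolding eigsp_def by simp
        show "ths (j + 1) = inverse q * (inverse q * ths j)"
          using Qm2[of "int d - 2 * int j"] by (simp add: algebra_simps)
        show "ths j \<noteq> ths (j + 1)" using as_nz Qne2[of "int d - 2 * int j"] by (simp add: algebra_simps)
      qed
      then obtain y1 y2 where yy: "inv Ks v = y1 + y2" "y1 \<in> Vs j" "y2 \<in> Vs (j + 1)" by blast
      have "y1 \<in> ssum scale {..i + 1} Vs" using yy j by (intro ssum_base[of j]) auto
      moreover have "y2 \<in> ssum scale {..i + 1} Vs" using yy j by (intro ssum_base[of "j + 1"]) auto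
      ultimately show "inv Ks v \<in> ssum scale {..i + 1} Vs" using yy(1) by (simp add: subspace_add[OF ssum_sub])
    qed
  qed
  have "w \<in> ssum scale {..i + 1} Vs" using w ssum_mono[of "{..i}" "{..i + 1}" Vs] by auto
  then have zVs: "z \<in> ssum scale {..i + 1} Vs" unfolding z_def using yVs
    by (intro subspace_diff[OF ssum_sub] subspace_scale[OF ssum_sub])
  have Bz: "B z = (b * Q2) *s z"
  proof (cases "i = d")
    case True
    then have "z = 0" using z_eq by simp
    then show ?thesis by (simp add: lin(4)[OF B_lin])
  next
    case False
    have zVa: "z \<in> ssum scale {..d - (i + 1)} Va"
      unfolding z_eq
    proof (rule subspace_sum[OF ssum_sub])
      fix j assume j: "j \<in> {i<..d}"
      then have "u j \<in> ssum scale {..d - j} Va" using u(1) by auto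
      moreover have "{..d - j} \<subseteq> {..d - (i + 1)}" using j by auto
      ultimately have "u j \<in> ssum scale {..d - (i + 1)} Va" using ssum_mono by blast
      then show "(q powi (int d - 2 * int j) - Q0) *s u j \<in> ssum scale {..d - (i + 1)} Va"
        by (rule subspace_scale[OF ssum_sub])
    qed
    have "B z = (b * q powi (2 * int (i + 1) - int d)) *s z"
      by (rule B_def[rule_format]) (use zVa zVs False i in auto)
    moreover have "2 * int (i + 1) - int d = (2 * int i - int d) + 2" by simp
    ultimately show ?thesis unfolding Q2_def by metis
  qed
  have Bw: "B w = (b * Q1) *s w" unfolding Q1_def using B_def i w by auto
  have yz: "y = Q0 *s w + z" unfolding z_def by simp
  have Q10: "Q1 * Q0 = 1" unfolding Q0_def Q1_def by (simp add: Qmul)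
  have Q12: "q * Q1 - inverse q * Q2 = 0" unfolding Q1_def Q2_def by (rule sA)
  have "q *s inv Ks (B w) - inverse q *s B (inv Ks w)
      = (q * b * (Q1 * Q0) - inverse q * b * (Q1 * Q0)) *s w + (b * (q * Q1 - inverse q * Q2)) *s z"
    unfolding y_def[symmetric] Bw lin(2)[OF iK_lin] yz lin(1)[OF B_lin] lin(2)[OF B_lin] Bz
    by (simp add: algebra_simps y_def)
  also have "\<dots> = ((q - inverse q) * b) *s w" unfolding Q10 Q12 by (simp add: algebra_simps)
  finally show ?thesis .
qed


lemma C2: "q *s inv Ks (B v) - inverse q *s B (inv Ks v) = ((q - inverse q) * b) *s v"
  by (rule eq_on_span[OF lin_o[OF iK_lin B_lin] lin_o[OF B_lin iK_lin] W_span]) (use C2_W in auto)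

lemma C4_X: assumes i: "i \<le> d" and x: "x \<in> X i"
  shows "q *s Ks (Bs x) - inverse q *s Bs (Ks x) = ((q - inverse q) * bs) *s x"
proof -
  define R0 where "R0 = q powi (2 * int i - int d)"
  define R1 where "R1 = q powi (int d - 2 * int i)"
  define R2 where "R2 = q powi ((int d - 2 * int i) + 2)"
  obtain u where u: "\<forall>j\<in>{..d}. u j \<in> U j" "x = sum u {..i}" using H2[OF i] x by blast
  define y where "y = Ks x"
  define z where "z = y - R0 *s x"
  have y_eq: "y = (\<Sum>j\<in>{..i}. q powi (2 * int j - int d) *s u j)"
    unfolding y_def u(2) lin(5)[OF Ks_lin] using u(1) i by (intro sum.cong refl Ks_U) auto
  have "z = (\<Sum>j\<in>{..i}. (q powi (2 * int j - int d) - R0) *s u j)"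
    unfolding z_def y_eq u(2) by (simp add: scale_sum_right scale_left_diff_distrib sum_subtractf)
  also have "\<dots> = (\<Sum>j\<in>{..<i}. (q powi (2 * int j - int d) - R0) *s u j)"
  proof -
    have "{..i} = insert i {..<i}" by auto
    then show ?thesis unfolding R0_def by simp
  qed
  finally have z_eq: "z = (\<Sum>j\<in>{..<i}. (q powi (2 * int j - int d) - R0) *s u j)" .
  have Bz: "Bs z = (bs * R2) *s z"
  proof (cases "i = 0")
    case True
    then have "z = 0" using z_eq by simp
    then show ?thesis by (simp add: lin(4)[OF Bs_lin])
  next
    case False
    have zVs: "z \<in> ssum scale {d - (i - 1)..d} Vs"
      unfolding z_eq
    proof (rule subspace_sum[OF ssum_sub])
      fix j assume j: "j \<in> {..<i}"
      then have "u j \<in> ssum scale {d - j..d} Vs" using u(1) i by auto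
      moreover have "{d - j..d} \<subseteq> {d - (i - 1)..d}" using j i by auto
      ultimately have "u j \<in> ssum scale {d - (i - 1)..d} Vs" using ssum_mono by blast
      then show "(q powi (2 * int j - int d) - R0) *s u j \<in> ssum scale {d - (i - 1)..d} Vs"
        by (rule subspace_scale[OF ssum_sub])
    qed
    have yVa: "y \<in> ssum scale {i - 1..d} Va"
    proof -
      have "x \<in> span (\<Union>j\<in>{i..d}. Va j)" using x unfolding ssum_def by blast
      then show ?thesis unfolding y_def
      proof (rule lin_span[OF Ks_lin _ ssum_sub, rotated])
        fix v assume "v \<in> (\<Union>j\<in>{i..d}. Va j)"
        then obtain j where j: "i \<le> j" "j \<le> d" "v \<in> Va j" by auto
        have "\<exists>y1 y2. Ks v = y1 + y2 \<and> y1 \<in> Va j \<and> y2 \<in> Va (j - 1)"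
        proof (rule step_split[OF A_lin Ks_lin _ C1])
          show "A v = th j *s v" using j unfolding eigsp_def by simp
          have "2 * int (j - 1) - int d = (2 * int j - int d) - 2" using j False by (simp add: of_nat_diff)
          then show mu: "th (j - 1) = inverse q * (inverse q * th j)"
            using Qm2[of "2 * int j - int d"] by (simp add: algebra_simps)
          show "th j \<noteq> th (j - 1)" unfolding mu
            using a_nz Qne2[of "2 * int j - int d"] Qm2[of "2 * int j - int d"] by (simp add: algebra_simps)
        qed
        then obtain y1 y2 where yy: "Ks v = y1 + y2" "y1 \<in> Va j" "y2 \<in> Va (j - 1)" by blast
        have "y1 \<in> ssum scale {i - 1..d} Va" using yy j by (intro ssum_base[of j]) auto
        moreover have "y2 \<in> ssum scale {i - 1..d} Va" using yy j by (intro ssum_base[of "j - 1"]) auto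
        ultimately show "Ks v \<in> ssum scale {i - 1..d} Va" using yy(1) by (simp add: subspace_add[OF ssum_sub])
      qed
    qed
    have "{i..d} \<subseteq> {i - 1..d}" by auto
    then have "x \<in> ssum scale {i - 1..d} Va" using x ssum_mono[of "{i..d}" "{i - 1..d}" Va] by blast
    then have zVa: "z \<in> ssum scale {i - 1..d} Va" unfolding z_def using yVa
      by (intro subspace_diff[OF ssum_sub] subspace_scale[OF ssum_sub])
    have "Bs z = (bs * q powi (int d - 2 * int (i - 1))) *s z"
      by (rule Bs_def[rule_format]) (use zVa zVs False i in auto)
    moreover have "int d - 2 * int (i - 1) = (int d - 2 * int i) + 2" using False by (simp add: of_nat_diff)
    ultimately show ?thesis unfolding R2_def by metis
  qed
  have Bx: "Bs x = (bs * R1) *s x" unfolding R1_def using Bs_def i x by auto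
  have yz: "y = R0 *s x + z" unfolding z_def by simp
  have R10: "R1 * R0 = 1" unfolding R0_def R1_def by (simp add: Qmul)
  have R12: "q * R1 - inverse q * R2 = 0" unfolding R1_def R2_def by (rule sA)
  have "q *s Ks (Bs x) - inverse q *s Bs (Ks x)
      = (q * bs * (R1 * R0) - inverse q * bs * (R1 * R0)) *s x + (bs * (q * R1 - inverse q * R2)) *s z"
    unfolding y_def[symmetric] Bx lin(2)[OF Ks_lin] yz lin(1)[OF Bs_lin] lin(2)[OF Bs_lin] Bz
    by (simp add: algebra_simps y_def)
  also have "\<dots> = ((q - inverse q) * bs) *s x" unfolding R10 R12 by (simp add: algebra_simps)
  finally show ?thesis .
qed

lemma C4: "q *s Ks (Bs v) - inverse q *s Bs (Ks v) = ((q - inverse q) * bs) *s v"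
  by (rule eq_on_span[OF lin_o[OF Ks_lin Bs_lin] lin_o[OF Bs_lin Ks_lin] X_span]) (use C4_X in auto)

lemma final_form: "q *s f v - inverse q *s g v = ((q - inverse q) * c) *s v
  \<Longrightarrow> inverse (q - inverse q) *s (q *s f v - inverse q *s g v) = c *s v"
  using qq by simp

end

theorem theorem10p2:
  fixes scale :: "'k::field \<Rightarrow> 'v::ab_group_add \<Rightarrow> 'v"
    and A As B Bs Ks :: "'v \<Rightarrow> 'v"
    and d :: nat
    and q a as b bs :: 'k
  assumes vs: "vector_space scale"
    and closed: "alg_closed TYPE('k)"
    and findim: "\<exists>S. finite S \<and> module.span scale S = UNIV"
    and nonzero: "\<exists>v::'v. v \<noteq> 0"
    and q_nz: "q \<noteq> 0"
    and q_not_root: "\<forall>n::nat. 0 < n \<longrightarrow> q ^ n \<noteq> 1"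
    and a_nz: "a \<noteq> 0" and as_nz: "as \<noteq> 0" and b_nz: "b \<noteq> 0" and bs_nz: "bs \<noteq> 0"
    and TD: "tridiagonal_pair_std scale A As d
               (\<lambda>i. a * q powi (2 * int i - int d)) (\<lambda>i. as * q powi (int d - 2 * int i))"
    and dec1: "is_decomposition scale d (\<lambda>i.
               ssum scale {..i} (\<lambda>j. eigsp scale As (as * q powi (int d - 2 * int j)))
             \<inter> ssum scale {..d - i} (\<lambda>j. eigsp scale A (a * q powi (2 * int j - int d))))"
    and dec2: "is_decomposition scale d (\<lambda>i.
               ssum scale {d - i..d} (\<lambda>j. eigsp scale As (as * q powi (int d - 2 * int j)))
             \<inter> ssum scale {i..d} (\<lambda>j. eigsp scale A (a * q powi (2 * int j - int d))))"
    and dec3: "is_decomposition scale d (\<lambda>i.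
               ssum scale {d - i..d} (\<lambda>j. eigsp scale As (as * q powi (int d - 2 * int j)))
             \<inter> ssum scale {..d - i} (\<lambda>j. eigsp scale A (a * q powi (2 * int j - int d))))"
    and B_lin: "Vector_Spaces.linear scale scale B"
    and B_def: "\<forall>i\<le>d. \<forall>v \<in>
               ssum scale {..i} (\<lambda>j. eigsp scale As (as * q powi (int d - 2 * int j)))
             \<inter> ssum scale {..d - i} (\<lambda>j. eigsp scale A (a * q powi (2 * int j - int d))).
               B v = scale (b * q powi (2 * int i - int d)) v"
    and Bs_lin: "Vector_Spaces.linear scale scale Bs"
    and Bs_def: "\<forall>i\<le>d. \<forall>v \<in>
               ssum scale {d - i..d} (\<lambda>j. eigsp scale As (as * q powi (int d - 2 * int j)))
             \<inter> ssum scale {i..d} (\<lambda>j. eigsp scale A (a * q powi (2 * int j - int d))).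
               Bs v = scale (bs * q powi (int d - 2 * int i)) v"
    and Ks_lin: "Vector_Spaces.linear scale scale Ks"
    and Ks_def: "\<forall>i\<le>d. \<forall>v \<in>
               ssum scale {d - i..d} (\<lambda>j. eigsp scale As (as * q powi (int d - 2 * int j)))
             \<inter> ssum scale {..d - i} (\<lambda>j. eigsp scale A (a * q powi (2 * int j - int d))).
               Ks v = scale (q powi (2 * int i - int d)) v"
  shows "(\<forall>v. scale (inverse (q - inverse q))
              (scale q (A (Ks v)) - scale (inverse q) (Ks (A v))) = scale a v)
       \<and> (\<forall>v. scale (inverse (q - inverse q))
              (scale q (inv Ks (B v)) - scale (inverse q) (B (inv Ks v))) = scale b v)
       \<and> (\<forall>v. scale (inverse (q - inverse q))
              (scale q (As (inv Ks v)) - scale (inverse q) (inv Ks (As v))) = scale as v)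
       \<and> (\<forall>v. scale (inverse (q - inverse q))
              (scale q (Ks (Bs v)) - scale (inverse q) (Bs (Ks v))) = scale bs v)"
proof -
  interpret T: tds scale A As B Bs Ks d q a as b bs
    by (rule tds.intro[OF vs tds_axioms.intro[OF q_nz q_not_root a_nz as_nz TD dec1 dec2 dec3
          B_lin B_def Bs_lin Bs_def Ks_lin Ks_def]])
  show ?thesis
    by (intro conjI allI T.final_form T.C1 T.C2 T.C3 T.C4)
qed

end
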